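(* Suppose positive individuals of groups $a$ and $b$ have the same feature distribution, i.e. the conditional distribution of $X$ given $Y=1$ is independent of $G$. Let $c_a$ be an outcome monotonic cost and suppose group $b$ is disadvantaged in cost compared to group $a$, i.e. $c_b(x,x')=\kappa\, c_a(x,x')$ for all $x,x'\in\mathcal X$ and some scalar $\kappa>1$. Then the social gap $\mathcal G(\tau)$ is non-negative and monotonically non-decreasing in the threshold $\tau$.
   Context: Individuals have features $x\in\mathcal X$, label $y\in\{0,1\}$ and group $g\in\{a,b\}$, with $(X,Y,G)$ jointly distributed. Outcome likelihood $\ell(x)=\Pr[Y=1\mid X=x]>0$ for all $x$. A cost $c$ is outcome monotonic if for all $x,x',x^*$: (i) $c(x,x')>0$ iff $\ell(x')>\ell(x)$; (ii) $c(x,x^* )>c(x',x^* )>0$ iff $\ell(x^* )>\ell(x')>\ell(x)$; (iii) $c(x,x^* )>c(x,x')>0$ iff $\ell(x^* )>\ell(x')>\ell(x)$. Group $g$ has its own cost $c_g:\mathcal X\times\mathcal X\to\mathbb R_{\ge0}$ for changing features. Threshold classifier $f_\tau(x)=\mathbf 1[\ell(x)\ge\tau]$. Group social burden $\mathcal B_g(\tau)=\mathbb E[\min_{x':f_\tau(x')=1}c_g(X,x')\mid Y=1,G=g]$; social gap $\mathcal G(\tau)=\mathcal B_b(\tau)-\mathcal B_a(\tau)$. *)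

theory Defs
  imports "HOL-Probability.Probability"
begin

datatype grp = GA | GB

definition outcome_monotonic :: "('x \<Rightarrow> real) \<Rightarrow> ('x \<Rightarrow> 'x \<Rightarrow> real) \<Rightarrow> bool" where
  "outcome_monotonic l c \<longleftrightarrow>
     (\<forall>x x'. c x x' > 0 \<longleftrightarrow> l x' > l x) \<and>
     (\<forall>x x' xs. (c x xs > c x' xs \<and> c x' xs > 0) \<longleftrightarrow> (l xs > l x' \<and> l x' > l x)) \<and>
     (\<forall>x x' xs. (c x xs > c x x' \<and> c x x' > 0) \<longleftrightarrow> (l xs > l x' \<and> l x' > l x))"

definition thr_clf :: "('x \<Rightarrow> real) \<Rightarrow> real \<Rightarrow> 'x \<Rightarrow> nat" where
  "thr_clf l \<tau> x = (if l x \<ge> \<tau> then 1 else 0)"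

text \<open>l is (a version of) Pr[Y = 1 | X = x]: for every measurable feature set S,
  Pr[Y = 1, X in S] = E[1[X in S] l(X)].\<close>
definition is_outcome_likelihood ::
  "'w measure \<Rightarrow> 'x measure \<Rightarrow> ('w \<Rightarrow> 'x) \<Rightarrow> ('w \<Rightarrow> nat) \<Rightarrow> ('x \<Rightarrow> real) \<Rightarrow> bool" where
  "is_outcome_likelihood M N X Y l \<longleftrightarrow>
     l \<in> borel_measurable N \<and>
     (\<forall>S \<in> sets N. emeasure M {\<omega> \<in> space M. Y \<omega> = 1 \<and> X \<omega> \<in> S}
        = (\<integral>\<^sup>+ \<omega>. indicator {\<omega> \<in> space M. X \<omega> \<in> S} \<omega> * ennreal (l (X \<omega>)) \<partial>M))"

definition pos_event :: "'w measure \<Rightarrow> ('w \<Rightarrow> nat) \<Rightarrow> ('w \<Rightarrow> grp) \<Rightarrow> grp \<Rightarrow> 'w set" where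
  "pos_event M Y G g = {\<omega> \<in> space M. Y \<omega> = 1 \<and> G \<omega> = g}"

text \<open>Group social burden
  B_g(tau) = E[ min_{x' : f_tau(x') = 1} c_g(X, x') | Y = 1, G = g ],
  as an elementary conditional expectation (nonnegative integral divided by the
  probability of the conditioning event); the minimum is rendered as an infimum
  in [0, infinity] (infinite if no x' is accepted).\<close>
definition social_burden ::
  "'w measure \<Rightarrow> ('w \<Rightarrow> 'x) \<Rightarrow> ('w \<Rightarrow> nat) \<Rightarrow> ('w \<Rightarrow> grp) \<Rightarrow> ('x \<Rightarrow> real)
     \<Rightarrow> (grp \<Rightarrow> 'x \<Rightarrow> 'x \<Rightarrow> real) \<Rightarrow> grp \<Rightarrow> real \<Rightarrow> ennreal" where
  "social_burden M X Y G l c g \<tau> =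
     (\<integral>\<^sup>+ \<omega>. indicator (pos_event M Y G g) \<omega> *
          (INF x' \<in> {x'. thr_clf l \<tau> x' = 1}. ennreal (c g (X \<omega>) x')) \<partial>M)
     / emeasure M (pos_event M Y G g)"

definition social_gap ::
  "'w measure \<Rightarrow> ('w \<Rightarrow> 'x) \<Rightarrow> ('w \<Rightarrow> nat) \<Rightarrow> ('w \<Rightarrow> grp) \<Rightarrow> ('x \<Rightarrow> real)
     \<Rightarrow> (grp \<Rightarrow> 'x \<Rightarrow> 'x \<Rightarrow> real) \<Rightarrow> real \<Rightarrow> ereal" where
  "social_gap M X Y G l c \<tau> =
     enn2ereal (social_burden M X Y G l c GB \<tau>) - enn2ereal (social_burden M X Y G l c GA \<tau>)"

end

theory Submission
  imports Defs
begin

lemma INF_cmult_ennreal: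
  fixes f :: "'a \<Rightarrow> ennreal" and k :: real
  assumes "k > 0"
  shows "(INF x\<in>A. ennreal k * f x) = ennreal k * (INF x\<in>A. f x)"
proof (rule antisym)
  have ki: "inverse (ennreal k) * ennreal k = 1"
    using assms by (metis Groups.mult_ac(2) ennreal_1 ennreal_mult' inverse_ennreal
    order_less_imp_not_less right_inverse verit_comp_simplify1(3))
  have "inverse (ennreal k) * (INF x\<in>A. ennreal k * f x) \<le> (INF x\<in>A. f x)"
  proof (rule INF_greatest)
    fix x assume "x \<in> A"
    have "inverse (ennreal k) * (INF x\<in>A. ennreal k * f x) \<le> inverse (ennreal k) * (ennreal k * f x)"
      by (intro mult_left_mono INF_lower \<open>x\<in>A\<close>) auto
    also have "\<dots> = f x" using ki by (simp add: mult.assoc[symmetric])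
    finally show "inverse (ennreal k) * (INF x\<in>A. ennreal k * f x) \<le> f x" .
  qed
  then have "ennreal k * (inverse (ennreal k) * (INF x\<in>A. ennreal k * f x)) \<le> ennreal k * (INF x\<in>A. f x)"
    by (rule mult_left_mono) auto
  then show "(INF x\<in>A. ennreal k * f x) \<le> ennreal k * (INF x\<in>A. f x)"
    using ki by (simp add: mult.assoc[symmetric] mult.commute)
next
  show "ennreal k * (INF x\<in>A. f x) \<le> (INF x\<in>A. ennreal k * f x)"
    by (intro INF_greatest mult_left_mono INF_lower) auto
qed

lemma antitone_borel:
  fixes \<psi> :: "real \<Rightarrow> ennreal"
  assumes "\<And>s t. s \<le> t \<Longrightarrow> \<psi> t \<le> \<psi> s"
  shows "\<psi> \<in> borel_measurable borel"
proof (rule borel_measurableI_greater)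
  fix y
  have "is_interval {x. y < \<psi> x}"
    unfolding is_interval_1 using assms by (auto intro: less_le_trans)
  then show "{x \<in> space borel. y < \<psi> x} \<in> sets borel"
    using real_interval_borel_measurable by simp
qed

lemma cost_antitone:
  assumes om: "outcome_monotonic l c" and nn: "\<forall>x x'. c x x' \<ge> 0"
    and le: "l x \<le> l y"
  shows "c y x' \<le> c x x'"
proof (cases "l x' > l y")
  case False
  then have "\<not> c y x' > 0" using om unfolding outcome_monotonic_def by auto
  then show ?thesis using nn by (meson not_le order.strict_trans1)
next
  case True
  show ?thesis
  proof (cases "l y > l x")
    case True2: True
    then have "c x x' > c y x'" using om True unfolding outcome_monotonic_def by blast
    then show ?thesis by simp
  next
    case False
    then have eq: "l x = l y" using le by simp
    show ?thesis
    proof (rule ccontr)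
      assume "\<not> c y x' \<le> c x x'"
      then have "c y x' > c x x'" by simp
      moreover have "c x x' > 0" using om True eq unfolding outcome_monotonic_def by auto
      ultimately have "l x' > l x \<and> l x > l y" using om unfolding outcome_monotonic_def by blast
      then show False using eq by simp
    qed
  qed
qed

lemma F_props:
  fixes \<kappa> :: real
  assumes "\<kappa> > 1"
  defines "F \<equiv> \<lambda>t::ennreal. enn2ereal (ennreal \<kappa> * t) - enn2ereal t"
  shows "0 \<le> F t" and "s \<le> t \<Longrightarrow> F s \<le> F t"
proof -
  have top: "F top = \<infinity>"
    using assms by (simp add: F_def ennreal_mult_top)
  have fin: "F (ennreal r) = ereal (\<kappa> * r - r)" if "r \<ge> 0" for r
    using assms that by (simp add: F_def ennreal_mult[symmetric])
  show "0 \<le> F t"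
  proof (cases t rule: ennreal_cases)
    case (real r)
    then have "1 * r \<le> \<kappa> * r" using assms by (intro mult_right_mono) auto
    then show ?thesis using fin real by simp
  qed (simp add: top)
  assume st: "s \<le> t"
  show "F s \<le> F t"
  proof (cases t rule: ennreal_cases)
    case (real r)
    then obtain q where q: "s = ennreal q" "q \<ge> 0" "q \<le> r"
      using st by (metis ennreal_cases ennreal_le_iff ennreal_neq_top top.extremum_uniqueI)
    have "\<kappa> * q - q \<le> \<kappa> * r - r"
    proof -
      have "(\<kappa> - 1) * q \<le> (\<kappa> - 1) * r" using q assms by (intro mult_left_mono) auto
      then show ?thesis by (simp add: algebra_simps)
    qed
    then show ?thesis using fin q real by simp
  qed (simp add: top)
qed

theorem theorem3:
  fixes M :: "'w measure" and N :: "'x measure"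
    and X :: "'w \<Rightarrow> 'x" and Y :: "'w \<Rightarrow> nat" and G :: "'w \<Rightarrow> grp"
    and l :: "'x \<Rightarrow> real" and c :: "grp \<Rightarrow> 'x \<Rightarrow> 'x \<Rightarrow> real" and \<kappa> :: real
  assumes "prob_space M"
    and "space N = UNIV"
    and "X \<in> measurable M N"
    and "Y \<in> measurable M (count_space UNIV)" and "\<forall>\<omega> \<in> space M. Y \<omega> \<in> {0, 1}"
    and "G \<in> measurable M (count_space UNIV)"
    and "is_outcome_likelihood M N X Y l"
    and "\<forall>x. l x > 0"
    and "\<forall>g. emeasure M (pos_event M Y G g) > 0"
    and "\<forall>g x x'. c g x x' \<ge> 0"
    and same_dist: "\<forall>S \<in> sets N.
           measure M ({\<omega> \<in> space M. X \<omega> \<in> S} \<inter> pos_event M Y G GA) / measure M (pos_event M Y G GA)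
         = measure M ({\<omega> \<in> space M. X \<omega> \<in> S} \<inter> pos_event M Y G GB) / measure M (pos_event M Y G GB)"
    and "outcome_monotonic l (c GA)"
    and "\<kappa> > 1"
    and "\<forall>x x'. c GB x x' = \<kappa> * c GA x x'"
  shows "(\<forall>\<tau>. 0 \<le> social_gap M X Y G l c \<tau>) \<and> mono (social_gap M X Y G l c)"
proof -
  interpret prob_space M by fact
  note [measurable] = assms(3,4,6)
  have lmeas[measurable]: "l \<in> borel_measurable N"
    using assms(7) unfolding is_outcome_likelihood_def by simp
  have Pmeas[measurable]: "pos_event M Y G g \<in> sets M" for g
    unfolding pos_event_def by measurable
  define P where "P g = pos_event M Y G g" for g
  have Pm[measurable]: "P g \<in> sets M" for g using Pmeas by (simp add: P_def)
  define A where "A \<tau> = {x'. thr_clf l \<tau> x' = 1}" for \<tau>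
  define H where "H \<tau> x = (INF x'\<in>A \<tau>. ennreal (c GA x x'))" for \<tau> x
  define B where "B \<tau> = social_burden M X Y G l c GA \<tau>" for \<tau>
  define I where "I g \<tau> = (\<integral>\<^sup>+ \<omega>. indicator (P g) \<omega> * H \<tau> (X \<omega>) \<partial>M)" for g \<tau>
  have BA: "B \<tau> = I GA \<tau> / emeasure M (P GA)" for \<tau>
    unfolding B_def social_burden_def I_def H_def A_def P_def ..
  have Hmeas[measurable]: "H \<tau> \<in> borel_measurable N" for \<tau>
  proof -
    define \<psi> where "\<psi> t = (INF y\<in>{y. l y \<le> t}. H \<tau> y)" for t
    have Hanti: "H \<tau> y \<le> H \<tau> x" if "l x \<le> l y" for x y
      unfolding H_def
      by (intro INF_mono' ennreal_leI cost_antitone[OF assms(12)]) (use assms(10) that in auto)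
    have "\<psi> \<in> borel_measurable borel"
      by (rule antitone_borel) (auto simp: \<psi>_def intro!: INF_superset_mono)
    moreover have "H \<tau> x = \<psi> (l x)" for x
      unfolding \<psi>_def by (rule antisym) (auto intro!: INF_greatest INF_lower Hanti)
    ultimately show ?thesis
      by (metis (no_types, lifting) ext lmeas measurable_comp comp_def)
  qed
  have Pfin: "emeasure M (P g) = ennreal (measure M (P g))" for g
    by (simp add: emeasure_eq_measure)
  have Ppos: "measure M (P g) > 0" for g
    using assms(9) Pfin by (metis P_def ennreal_less_zero_iff)
  define \<mu> where "\<mu> g = distr (density M (\<lambda>\<omega>. indicator (P g) \<omega> * inverse (emeasure M (P g)))) N X" for g
  have \<mu>_int: "integral\<^sup>N (\<mu> g) h = (\<integral>\<^sup>+ \<omega>. indicator (P g) \<omega> * h (X \<omega>) \<partial>M) / emeasure M (P g)"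
    if [measurable]: "h \<in> borel_measurable N" for g h
  proof -
    have "integral\<^sup>N (\<mu> g) h = (\<integral>\<^sup>+ \<omega>. h (X \<omega>) \<partial>density M (\<lambda>\<omega>. indicator (P g) \<omega> * inverse (emeasure M (P g))))"
      unfolding \<mu>_def by (simp add: nn_integral_distr)
    also have "\<dots> = (\<integral>\<^sup>+ \<omega>. (indicator (P g) \<omega> * h (X \<omega>)) * inverse (emeasure M (P g)) \<partial>M)"
      by (simp add: nn_integral_density ac_simps)
    also have "\<dots> = (\<integral>\<^sup>+ \<omega>. indicator (P g) \<omega> * h (X \<omega>) \<partial>M) * inverse (emeasure M (P g))"
      by (simp add: nn_integral_multc)
    finally show ?thesis by (simp add: divide_ennreal_def)
  qed
  have \<mu>_meas: "emeasure (\<mu> g) S = ennreal (measure M ({\<omega> \<in> space M. X \<omega> \<in> S} \<inter> P g) / measure M (P g))"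
    if S: "S \<in> sets N" for g S
  proof -
    have "emeasure (\<mu> g) S = integral\<^sup>N (\<mu> g) (indicator S)"
      by (rule nn_integral_indicator[symmetric]) (simp add: \<mu>_def S)
    also have "\<dots> = (\<integral>\<^sup>+ \<omega>. indicator (P g) \<omega> * indicator S (X \<omega>) \<partial>M) / emeasure M (P g)"
      using S by (intro \<mu>_int) simp
    also have "(\<integral>\<^sup>+ \<omega>. indicator (P g) \<omega> * indicator S (X \<omega>) \<partial>M)
        = (\<integral>\<^sup>+ \<omega>. indicator ({\<omega> \<in> space M. X \<omega> \<in> S} \<inter> P g) \<omega> \<partial>M)"
      using sets.sets_into_space[OF Pm[of g]]
      by (intro nn_integral_cong) (auto simp: indicator_def)
    also have "\<dots> = emeasure M ({\<omega> \<in> space M. X \<omega> \<in> S} \<inter> P g)"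
    proof (intro nn_integral_indicator sets.Int Pm)
      show "{\<omega> \<in> space M. X \<omega> \<in> S} \<in> sets M"
        using measurable_sets[OF assms(3) S] by (simp add: vimage_def Int_def conj_commute)
    qed
    finally show ?thesis
      using Ppos[of g] by (simp add: emeasure_eq_measure divide_ennreal)
  qed
  have \<mu>eq: "\<mu> GA = \<mu> GB"
  proof (rule measure_eqI)
    show "sets (\<mu> GA) = sets (\<mu> GB)" by (simp add: \<mu>_def)
    fix S assume "S \<in> sets (\<mu> GA)"
    then have S: "S \<in> sets N" by (simp add: \<mu>_def)
    show "emeasure (\<mu> GA) S = emeasure (\<mu> GB) S"
      unfolding \<mu>_meas[OF S] using same_dist S by (simp add: P_def)
  qed
  have transfer: "I GA \<tau> / emeasure M (P GA) = I GB \<tau> / emeasure M (P GB)" for \<tau>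
    unfolding I_def using \<mu>_int[OF Hmeas, symmetric] \<mu>eq by metis
  have BB: "social_burden M X Y G l c GB \<tau> = ennreal \<kappa> * B \<tau>" for \<tau>
  proof -
    have "(INF x'\<in>A \<tau>. ennreal (c GB x x')) = ennreal \<kappa> * H \<tau> x" for x
    proof -
      have "(INF x'\<in>A \<tau>. ennreal (c GB x x')) = (INF x'\<in>A \<tau>. ennreal \<kappa> * ennreal (c GA x x'))"
        using assms(10,13,14) by (intro INF_cong refl) (simp add: ennreal_mult)
      also have "\<dots> = ennreal \<kappa> * H \<tau> x"
        unfolding H_def using assms(13) by (intro INF_cmult_ennreal) simp
      finally show ?thesis .
    qed
    then have "social_burden M X Y G l c GB \<tau>
        = (\<integral>\<^sup>+ \<omega>. ennreal \<kappa> * (indicator (P GB) \<omega> * H \<tau> (X \<omega>)) \<partial>M) / emeasure M (P GB)"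
      unfolding social_burden_def A_def P_def by (simp add: ac_simps)
    also have "\<dots> = ennreal \<kappa> * I GB \<tau> / emeasure M (P GB)"
      unfolding I_def by (subst nn_integral_cmult) auto
    also have "\<dots> = ennreal \<kappa> * (I GB \<tau> / emeasure M (P GB))"
      by (simp add: divide_ennreal_def mult.assoc)
    also have "\<dots> = ennreal \<kappa> * B \<tau>"
      using transfer BA by simp
    finally show ?thesis .
  qed
  have Bmono: "B s \<le> B t" if "s \<le> t" for s t
  proof -
    have "A t \<subseteq> A s" using that by (auto simp: A_def thr_clf_def split: if_splits)
    then have "H s x \<le> H t x" for x unfolding H_def by (rule INF_superset_mono) simp
    then have "I GA s \<le> I GA t" unfolding I_def
      by (intro nn_integral_mono mult_left_mono) auto
    then show ?thesis unfolding BA divide_ennreal_def by (rule mult_right_mono) simp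
  qed
  have gap: "social_gap M X Y G l c \<tau> = enn2ereal (ennreal \<kappa> * B \<tau>) - enn2ereal (B \<tau>)" for \<tau>
    unfolding social_gap_def BB B_def ..
  show ?thesis
    using F_props[OF assms(13)] Bmono by (auto simp: gap mono_def)
qed

end
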